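(* Let $G$ be a bipartite cactus graph with $n\ge4$ vertices and $m$ edges, with degree sequence $d$, and suppose $\beta\ge 1$, where $\beta=\max\{\mu_1,\tfrac12(\mu_1+\mu_{odd})\}$. Then $m\le \left\lfloor\frac{4(n-1)-\beta}{3}\right\rfloor$.
   Context: A cactus graph is a connected simple graph in which every edge belongs to at most one cycle; a bi-cactus is a bipartite cactus. For the degree sequence $d$, $\mu_1$ is the number of entries equal to $1$ and $\mu_{odd}$ is the number of entries that are odd integers greater than $1$. *)

theory Defs
  imports Complex_Main
begin

definition simple_graph :: "'a set \<Rightarrow> 'a set set \<Rightarrow> bool" where
  "simple_graph V E \<longleftrightarrow> finite V \<and> (\<forall>e\<in>E. e \<subseteq> V \<and> card e = 2)"

definition is_walk :: "'a set set \<Rightarrow> 'a list \<Rightarrow> bool" where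
  "is_walk E xs \<longleftrightarrow> xs \<noteq> [] \<and> (\<forall>i. Suc i < length xs \<longrightarrow> {xs ! i, xs ! Suc i} \<in> E)"

definition connected_graph :: "'a set \<Rightarrow> 'a set set \<Rightarrow> bool" where
  "connected_graph V E \<longleftrightarrow>
     (\<forall>u\<in>V. \<forall>v\<in>V. \<exists>xs. is_walk E xs \<and> hd xs = u \<and> last xs = v)"

text \<open>A cycle is given by a list of distinct vertices v0,...,v(k-1), k >= 3,
with v(i) v(i+1) adjacent (indices mod k); as a subgraph it is determined by its edge set.\<close>

definition is_cycle :: "'a set set \<Rightarrow> 'a list \<Rightarrow> bool" where
  "is_cycle E xs \<longleftrightarrow> length xs \<ge> 3 \<and> distinct xs \<and>
     (\<forall>i < length xs. {xs ! i, xs ! ((Suc i) mod length xs)} \<in> E)"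

definition cycle_edges :: "'a list \<Rightarrow> 'a set set" where
  "cycle_edges xs = {{xs ! i, xs ! ((Suc i) mod length xs)} | i. i < length xs}"

definition cactus :: "'a set \<Rightarrow> 'a set set \<Rightarrow> bool" where
  "cactus V E \<longleftrightarrow> simple_graph V E \<and> connected_graph V E \<and>
     (\<forall>e\<in>E. \<forall>C1 C2. is_cycle E C1 \<and> is_cycle E C2 \<and>
        e \<in> cycle_edges C1 \<and> e \<in> cycle_edges C2 \<longrightarrow> cycle_edges C1 = cycle_edges C2)"

definition bipartite :: "'a set \<Rightarrow> 'a set set \<Rightarrow> bool" where
  "bipartite V E \<longleftrightarrow> (\<exists>X. X \<subseteq> V \<and> (\<forall>e\<in>E. card (e \<inter> X) = 1))"

definition bi_cactus :: "'a set \<Rightarrow> 'a set set \<Rightarrow> bool" where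
  "bi_cactus V E \<longleftrightarrow> cactus V E \<and> bipartite V E"

definition degree :: "'a set set \<Rightarrow> 'a \<Rightarrow> nat" where
  "degree E v = card {e\<in>E. v \<in> e}"

definition mu1 :: "'a set \<Rightarrow> 'a set set \<Rightarrow> nat" where
  "mu1 V E = card {v\<in>V. degree E v = 1}"

definition mu_odd :: "'a set \<Rightarrow> 'a set set \<Rightarrow> nat" where
  "mu_odd V E = card {v\<in>V. odd (degree E v) \<and> degree E v > 1}"

definition beta :: "'a set \<Rightarrow> 'a set set \<Rightarrow> real" where
  "beta V E = max (real (mu1 V E)) ((real (mu1 V E) + real (mu_odd V E)) / 2)"

end

theory Submission
  imports Defs
begin


definition nxt :: "nat \<Rightarrow> nat \<Rightarrow> nat" where
  "nxt k i = (if Suc i = k then 0 else Suc i)"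

lemma mod_nxt: "i < k \<Longrightarrow> Suc i mod k = nxt k i"
  by (auto simp: nxt_def)

lemma nxt_less: "i < k \<Longrightarrow> nxt k i < k"
  by (auto simp: nxt_def)

lemma cycle_edges_nxt:
  "cycle_edges xs = (\<lambda>i. {xs ! i, xs ! nxt (length xs) i}) ` {..<length xs}"
  unfolding cycle_edges_def by (auto simp: mod_nxt)

lemma is_cycle_nxt:
  "is_cycle E xs \<longleftrightarrow> length xs \<ge> 3 \<and> distinct xs \<and>
     (\<forall>i < length xs. {xs ! i, xs ! nxt (length xs) i} \<in> E)"
  unfolding is_cycle_def by (auto simp: mod_nxt)

lemma cycle_edges_sub: "is_cycle E C \<Longrightarrow> cycle_edges C \<subseteq> E"
  unfolding is_cycle_nxt cycle_edges_nxt by auto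

lemma is_cycle_mono: "is_cycle E' C \<Longrightarrow> E' \<subseteq> E \<Longrightarrow> is_cycle E C"
  unfolding is_cycle_def by auto

lemma cycle_edge_sub_set: "e \<in> cycle_edges C \<Longrightarrow> length C > 0 \<Longrightarrow> e \<subseteq> set C"
proof -
  assume e: "e \<in> cycle_edges C" and l: "length C > 0"
  then obtain i where i: "i < length C" "e = {C ! i, C ! nxt (length C) i}"
    unfolding cycle_edges_nxt by auto
  have "nxt (length C) i < length C" using nxt_less[OF i(1)] .
  then show "e \<subseteq> set C" using i by simp
qed

lemma cycle_card:
  assumes "is_cycle E C"
  shows "card (cycle_edges C) = length C"
proof -
  let ?k = "length C"
  have k3: "?k \<ge> 3" and d: "distinct C" using assms by (auto simp: is_cycle_def)
  have "inj_on (\<lambda>i. {C ! i, C ! nxt ?k i}) {..<?k}"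
  proof (rule inj_onI)
    fix i j assume i: "i \<in> {..<?k}" and j: "j \<in> {..<?k}"
      and eq: "{C ! i, C ! nxt ?k i} = {C ! j, C ! nxt ?k j}"
    have ni: "nxt ?k i < ?k" "nxt ?k j < ?k" using i j nxt_less by auto
    from eq consider "C ! i = C ! j" | "C ! i = C ! nxt ?k j \<and> C ! nxt ?k i = C ! j"
      by (auto simp: doubleton_eq_iff)
    then show "i = j"
    proof cases
      case 1 then show ?thesis using d i j by (simp add: nth_eq_iff_index_eq)
    next
      case 2
      then have "i = nxt ?k j" "nxt ?k i = j" using d i j ni by (auto simp: nth_eq_iff_index_eq)
      then show ?thesis using k3 i j by (auto simp: nxt_def split: if_splits)
    qed
  qed
  then show ?thesis unfolding cycle_edges_nxt by (simp add: card_image)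
qed

lemma cycle_vertex_card:
  assumes "is_cycle E C" and "v \<in> set C"
  shows "card {e \<in> cycle_edges C. v \<in> e} = 2"
proof -
  let ?k = "length C"
  have k3: "?k \<ge> 3" and d: "distinct C" using assms by (auto simp: is_cycle_def)
  obtain i where i: "i < ?k" "C ! i = v" using assms(2) by (auto simp: in_set_conv_nth)
  define p where "p = (if i = 0 then ?k - 1 else i - 1)"
  have p: "p < ?k" "nxt ?k p = i" using i k3 by (auto simp: p_def nxt_def)
  define a where "a = {C ! i, C ! nxt ?k i}"
  define b where "b = {C ! p, C ! nxt ?k p}"
  have ni: "nxt ?k i < ?k" using i nxt_less by auto
  have set_eq: "{e \<in> cycle_edges C. v \<in> e} = {a, b}"
  proof
    show "{e \<in> cycle_edges C. v \<in> e} \<subseteq> {a, b}"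
    proof
      fix e assume "e \<in> {e \<in> cycle_edges C. v \<in> e}"
      then obtain j where j: "j < ?k" "e = {C ! j, C ! nxt ?k j}" "v \<in> e"
        unfolding cycle_edges_nxt by auto
      have nj: "nxt ?k j < ?k" using j nxt_less by auto
      from j consider "C ! j = C ! i" | "C ! nxt ?k j = C ! i" using i by auto
      then show "e \<in> {a, b}"
      proof cases
        case 1 then have "j = i" using nth_eq_iff_index_eq[OF d j(1) i(1)] by simp
        then show ?thesis using j a_def by auto
      next
        case 2 then have "nxt ?k j = i" using nth_eq_iff_index_eq[OF d nj i(1)] by simp
        then have "j = p" using j k3 i by (auto simp: p_def nxt_def split: if_splits)
        then show ?thesis using j b_def by auto
      qed
    qed
  next
    show "{a, b} \<subseteq> {e \<in> cycle_edges C. v \<in> e}"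
      using i p unfolding a_def b_def cycle_edges_nxt by auto
  qed
  have "a \<noteq> b"
  proof
    assume "a = b"
    then have "{C ! i, C ! nxt ?k i} = {C ! i, C ! p}" using p a_def b_def by (simp add: insert_commute)
    moreover have "C ! i \<noteq> C ! nxt ?k i" using d i ni k3
      by (auto simp: nth_eq_iff_index_eq nxt_def)
    ultimately have "C ! nxt ?k i = C ! p" by (auto simp: doubleton_eq_iff)
    then have "nxt ?k i = p" using d ni p by (simp add: nth_eq_iff_index_eq)
    then show False using i k3 by (auto simp: p_def nxt_def split: if_splits)
  qed
  then show ?thesis using set_eq by simp
qed

lemma bip_no_triangle:
  assumes "bipartite V E" "is_cycle E C"
  shows "length C \<ge> 4"
proof (rule ccontr)
  assume "\<not> length C \<ge> 4"
  then have k: "length C = 3" using assms(2) by (auto simp: is_cycle_def)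
  obtain X where X: "\<forall>e\<in>E. card (e \<inter> X) = 1" using assms(1) by (auto simp: bipartite_def)
  have d: "distinct C" using assms(2) by (auto simp: is_cycle_def)
  have ed: "\<And>i. i < 3 \<Longrightarrow> {C ! i, C ! nxt 3 i} \<in> E" using assms(2) k unfolding is_cycle_nxt by simp
  have n: "nxt 3 0 = 1" "nxt 3 1 = 2" "nxt 3 2 = 0" by (simp_all add: nxt_def)
  have e0: "{C!0, C!1} \<in> E" "{C!1, C!2} \<in> E" "{C!2, C!0} \<in> E"
    using ed[of 0] ed[of 1] ed[of 2] unfolding n by simp_all
  have ne: "C!0 \<noteq> C!1" "C!1 \<noteq> C!2" "C!2 \<noteq> C!0"
    using nth_eq_iff_index_eq[OF d, of 0 1] nth_eq_iff_index_eq[OF d, of 1 2] nth_eq_iff_index_eq[OF d, of 2 0] k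
    by simp_all
  have xo: "(a \<in> X) \<noteq> (b \<in> X)" if ab: "a \<noteq> b" "{a,b} \<in> E" for a b
  proof
    assume eq: "(a \<in> X) = (b \<in> X)"
    have c1: "card ({a,b} \<inter> X) = 1" using X ab by blast
    show False
    proof (cases "a \<in> X")
      case True
      then have "{a,b} \<inter> X = {a,b}" using eq by blast
      then show False using c1 ab(1) by simp
    next
      case False
      then have "{a,b} \<inter> X = {}" using eq by blast
      then show False using c1 by simp
    qed
  qed
  show False using xo[OF ne(1) e0(1)] xo[OF ne(2) e0(2)] xo[OF ne(3) e0(3)] by blast
qed


definition gpath :: "'a set \<Rightarrow> 'a set set \<Rightarrow> 'a list \<Rightarrow> bool" where
  "gpath V E xs \<longleftrightarrow> xs \<noteq> [] \<and> distinct xs \<and> set xs \<subseteq> V \<and>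
     (\<forall>i. Suc i < length xs \<longrightarrow> {xs ! i, xs ! Suc i} \<in> E)"

lemma card2_obtain: "card e = 2 \<Longrightarrow> x \<in> e \<Longrightarrow> \<exists>y. y \<noteq> x \<and> e = {x, y}"
  by (auto simp: card_2_iff)

lemma two_elems: "2 \<le> card A \<Longrightarrow> \<exists>a b. a \<in> A \<and> b \<in> A \<and> a \<noteq> b"
proof -
  assume c: "2 \<le> card A"
  then have fA: "finite A" using card.infinite by fastforce
  have "A \<noteq> {}" using c by auto
  then obtain a where a: "a \<in> A" by blast
  have "card (A - {a}) = card A - 1" using a fA by simp
  have "A - {a} \<noteq> {}"
  proof
    assume "A - {a} = {}"
    then have "card (A - {a}) = 0" by (simp only: card.empty)
    then show False using \<open>card (A - {a}) = card A - 1\<close> c by linarith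
  qed
  then obtain b where "b \<in> A - {a}" by blast
  then show ?thesis using a by blast
qed

lemma cycle_exists:
  assumes sg: "simple_graph V E" and v: "v \<in> V" and deg: "\<forall>u\<in>V. degree E u \<ge> 2"
  shows "\<exists>C. is_cycle E C"
proof -
  have fV: "finite V" and eV: "\<forall>e\<in>E. e \<subseteq> V \<and> card e = 2" using sg by (auto simp: simple_graph_def)
  let ?P = "{xs. gpath V E xs}"
  have fin: "finite ?P"
  proof (rule finite_subset)
    show "?P \<subseteq> {xs. set xs \<subseteq> V \<and> length xs \<le> card V}"
    proof
      fix xs assume "xs \<in> ?P"
      then have "distinct xs" "set xs \<subseteq> V" by (auto simp: gpath_def)
      then show "xs \<in> {xs. set xs \<subseteq> V \<and> length xs \<le> card V}"
      proof -
        have "length xs = card (set xs)" using \<open>distinct xs\<close> by (simp add: distinct_card)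
        also have "\<dots> \<le> card V" using card_mono[OF fV \<open>set xs \<subseteq> V\<close>] .
        finally show ?thesis using \<open>set xs \<subseteq> V\<close> by simp
      qed
    qed
    show "finite {xs. set xs \<subseteq> V \<and> length xs \<le> card V}" using finite_lists_length_le[OF fV] .
  qed
  have ne: "[v] \<in> ?P" using v by (simp add: gpath_def)
  define M where "M = Max (length ` ?P)"
  have "M \<in> length ` ?P" unfolding M_def using fin ne by (intro Max_in) auto
  then obtain xs where xs: "gpath V E xs" and lxs: "length xs = M" by auto
  have mx: "\<And>ys. gpath V E ys \<Longrightarrow> length ys \<le> length xs"
  proof -
    fix ys assume "gpath V E ys"
    then have "length ys \<in> length ` ?P" by simp
    then have "length ys \<le> M" unfolding M_def by (rule Max_ge[OF finite_imageI[OF fin]])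
    then show "length ys \<le> length xs" using lxs by simp
  qed
  have xsne: "xs \<noteq> []" and dxs: "distinct xs" and sxs: "set xs \<subseteq> V"
    and exs: "\<And>i. Suc i < length xs \<Longrightarrow> {xs ! i, xs ! Suc i} \<in> E" using xs by (auto simp: gpath_def)
  define x where "x = xs ! 0"
  have "xs ! 0 \<in> set xs" using xsne by simp
  then have x: "x \<in> V" using sxs x_def by blast
  have nb: "y \<in> set xs" if yE: "{x, y} \<in> E" and yx: "y \<noteq> x" for y
  proof (rule ccontr)
    assume yn: "y \<notin> set xs"
    have yV: "y \<in> V" using yE eV by auto
    have "gpath V E (y # xs)"
      unfolding gpath_def
    proof (intro conjI allI impI)
      show "y # xs \<noteq> []" by simp
      show "distinct (y # xs)" using yn dxs by simp
      show "set (y # xs) \<subseteq> V" using yV sxs by simp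
      fix i assume i: "Suc i < length (y # xs)"
      show "{(y # xs) ! i, (y # xs) ! Suc i} \<in> E"
      proof (cases i)
        case 0 then show ?thesis using yE x_def by (simp add: insert_commute)
      next
        case (Suc j) then show ?thesis using i exs by simp
      qed
    qed
    then have "length (y # xs) \<le> length xs" by (rule mx)
    then show False by simp
  qed
  have "2 \<le> card {e\<in>E. x \<in> e}" using deg x by (simp add: degree_def)
  from two_elems[OF this] obtain e1 e2 where e12: "e1 \<in> E" "x \<in> e1" "e2 \<in> E" "x \<in> e2" "e1 \<noteq> e2"
    by blast
  have "card e1 = 2" "card e2 = 2" using eV e12(1,3) by blast+
  obtain y1 where y1: "y1 \<noteq> x" "e1 = {x, y1}" using card2_obtain[OF \<open>card e1 = 2\<close> e12(2)] by blast
  obtain y2 where y2: "y2 \<noteq> x" "e2 = {x, y2}" using card2_obtain[OF \<open>card e2 = 2\<close> e12(4)] by blast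
  have "{x, y1} \<in> E" "{x, y2} \<in> E" using e12(1,3) y1(2) y2(2) by simp_all
  then have "y1 \<in> set xs" "y2 \<in> set xs" using nb y1(1) y2(1) by blast+
  then obtain j1 j2 where j: "j1 < length xs" "xs ! j1 = y1" "j2 < length xs" "xs ! j2 = y2"
    by (auto simp: in_set_conv_nth)
  have "j1 \<noteq> 0"
  proof
    assume "j1 = 0" then show False using j(2) y1(1) x_def by simp
  qed
  have "j2 \<noteq> 0"
  proof
    assume "j2 = 0" then show False using j(4) y2(1) x_def by simp
  qed
  have "j1 \<noteq> j2"
  proof
    assume "j1 = j2"
    then have "y1 = y2" using j(2,4) by simp
    then show False using y1(2) y2(2) e12(5) by simp
  qed
  have ex: "\<exists>j. 2 \<le> j \<and> j < length xs \<and> {x, xs ! j} \<in> E"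
  proof (cases "2 \<le> j1")
    case True then show ?thesis using j y1 e12 by blast
  next
    case False
    then have "2 \<le> j2" using \<open>j1 \<noteq> 0\<close> \<open>j2 \<noteq> 0\<close> \<open>j1 \<noteq> j2\<close> by linarith
    then show ?thesis using j y2 e12 by blast
  qed
  then obtain j where jj: "2 \<le> j" "j < length xs" "{x, xs ! j} \<in> E" by blast
  define C where "C = take (Suc j) xs"
  have lC: "length C = Suc j" using jj C_def by simp
  have "is_cycle E C"
    unfolding is_cycle_def
  proof (intro conjI allI impI)
    show "3 \<le> length C" using lC jj by simp
    show "distinct C" using dxs C_def by simp
    fix i assume i: "i < length C"
    show "{C ! i, C ! (Suc i mod length C)} \<in> E"
    proof (cases "i < j")
      case True
      then have "Suc i mod length C = Suc i" using lC by simp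
      then show ?thesis using True exs jj C_def lC by simp
    next
      case False
      then have "i = j" using i lC by simp
      then show ?thesis using jj C_def lC x_def by (simp add: insert_commute)
    qed
  qed
  then show ?thesis by blast
qed

lemma forest_bound:
  assumes "simple_graph V E" "\<forall>C. \<not> is_cycle E C" "V \<noteq> {}"
  shows "card E < card V"
  using assms
proof (induction "card V" arbitrary: V E rule: less_induct)
  case less
  have fV: "finite V" and eV: "\<forall>e\<in>E. e \<subseteq> V \<and> card e = 2" using less.prems by (auto simp: simple_graph_def)
  have fE: "finite E" using fV eV by (intro finite_subset[of E "Pow V"]) auto
  have "\<exists>v\<in>V. degree E v \<le> 1"
  proof (rule ccontr)
    assume "\<not> (\<exists>v\<in>V. degree E v \<le> 1)"
    then have "\<forall>u\<in>V. 2 \<le> degree E u" by auto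
    moreover obtain w where "w \<in> V" using less.prems(3) by auto
    ultimately show False using cycle_exists[OF less.prems(1)] less.prems(2) by blast
  qed
  then obtain v where v: "v \<in> V" "degree E v \<le> 1" by blast
  define V' where "V' = V - {v}"
  define E' where "E' = {e\<in>E. v \<notin> e}"
  have split: "E = E' \<union> {e\<in>E. v \<in> e}" "E' \<inter> {e\<in>E. v \<in> e} = {}" unfolding E'_def by auto
  have cE: "card E = card E' + degree E v"
  proof -
    have "card (E' \<union> {e\<in>E. v \<in> e}) = card E' + card {e\<in>E. v \<in> e}"
      using split(2) fE unfolding E'_def by (intro card_Un_disjoint) auto
    then show ?thesis using split(1) unfolding degree_def by simp
  qed
  show ?case
  proof (cases "V' = {}")
    case True
    then have "V = {v}" using v V'_def by auto
    have "E = {}"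
    proof (rule ccontr)
      assume "E \<noteq> {}"
      then obtain e where e: "e \<in> E" by blast
      then have "e \<subseteq> {v}" "card e = 2" using eV \<open>V = {v}\<close> by auto
      then have "card e \<le> card {v}" by (intro card_mono) auto
      then show False using \<open>card e = 2\<close> by simp
    qed
    have "card V > 0" using v fV card_gt_0_iff by blast
    then show ?thesis using \<open>E = {}\<close> by simp
  next
    case False
    have sg': "simple_graph V' E'" using fV eV unfolding simple_graph_def V'_def E'_def by auto
    have ac': "\<forall>C. \<not> is_cycle E' C" using less.prems(2) is_cycle_mono E'_def by blast
    have "card V' < card V" unfolding V'_def by (rule card_Diff1_less[OF fV v(1)])
    then have "card E' < card V'" using less.hyps sg' ac' False by blast
    moreover have "card V' = card V - 1" using v fV V'_def by simp
    ultimately show ?thesis using cE v by linarith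
  qed
qed


definition cyc_sets :: "'a set set \<Rightarrow> 'a set set set" where
  "cyc_sets E = {cycle_edges C | C. is_cycle E C}"

definition bridges :: "'a set set \<Rightarrow> 'a set set" where
  "bridges E = E - \<Union>(cyc_sets E)"

lemma fin_E: "simple_graph V E \<Longrightarrow> finite E"
  unfolding simple_graph_def by (meson Pow_iff finite_Pow_iff finite_subset subsetI)

lemma main_count:
  assumes cac: "cactus V E" and bip: "bipartite V E" and ne: "V \<noteq> {}"
  shows "3 * card E + card (bridges E) \<le> 4 * (card V - 1)"
proof -
  have sg: "simple_graph V E" using cac by (simp add: cactus_def)
  have fE: "finite E" using fin_E[OF sg] .
  define K where "K = cyc_sets E"
  define S where "S = \<Union>K"
  have KE: "k \<subseteq> E" if "k \<in> K" for k using that cycle_edges_sub unfolding K_def cyc_sets_def by blast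
  have Ksub: "K \<subseteq> Pow E" using KE by auto
  have fK: "finite K" using Ksub fE by (meson finite_Pow_iff finite_subset)
  have k4: "4 \<le> card k" if "k \<in> K" for k
    using that cycle_card bip_no_triangle[OF bip] unfolding K_def cyc_sets_def by fastforce
  have disj: "k1 \<inter> k2 = {}" if kk: "k1 \<in> K" "k2 \<in> K" "k1 \<noteq> k2" for k1 k2
  proof (rule ccontr)
    assume "k1 \<inter> k2 \<noteq> {}"
    then obtain e where e: "e \<in> k1" "e \<in> k2" by blast
    obtain C1 C2 where C: "is_cycle E C1" "k1 = cycle_edges C1" "is_cycle E C2" "k2 = cycle_edges C2"
      using kk unfolding K_def cyc_sets_def by blast
    have "e \<in> E" using e C cycle_edges_sub by blast
    then have "k1 = k2" using cac e C unfolding cactus_def by blast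
    then show False using kk by simp
  qed
  have fk: "finite k" if "k \<in> K" for k using KE that fE finite_subset by blast
  have cS: "card S = (\<Sum>k\<in>K. card k)"
    unfolding S_def using card_Union_disjoint[of K] fK fk disj by (simp add: pairwise_def disjnt_def)
  have "(\<Sum>k\<in>K. 4) \<le> (\<Sum>k\<in>K. card k)" using k4 by (intro sum_mono) auto
  then have S4: "4 * card K \<le> card S" using cS by simp
  define F where "F = (\<lambda>k. SOME e. e \<in> k) ` K"
  have cF: "card F \<le> card K" unfolding F_def using fK card_image_le by blast
  have Fk: "(SOME e. e \<in> k) \<in> k" if "k \<in> K" for k
    using k4[OF that] by (metis card.empty ex_in_conv not_numeral_le_zero someI_ex)
  have FE: "F \<subseteq> E" using Fk KE unfolding F_def by blast
  have SE: "S \<subseteq> E" using KE unfolding S_def by blast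
  have acyc: "\<forall>C. \<not> is_cycle (E - F) C"
  proof (intro allI notI)
    fix C assume C: "is_cycle (E - F) C"
    then have "is_cycle E C" using is_cycle_mono by blast
    then have k: "cycle_edges C \<in> K" unfolding K_def cyc_sets_def by blast
    have "(SOME e. e \<in> cycle_edges C) \<in> F" using k unfolding F_def by blast
    moreover have "(SOME e. e \<in> cycle_edges C) \<in> E - F" using Fk[OF k] cycle_edges_sub[OF C] by blast
    ultimately show False by blast
  qed
  have sg': "simple_graph V (E - F)" using sg unfolding simple_graph_def by auto
  have "card (E - F) < card V" using forest_bound[OF sg' acyc ne] .
  moreover have "card (E - F) = card E - card F" using FE fE by (simp add: card_Diff_subset finite_subset)
  moreover have "card F \<le> card E" using FE fE card_mono by blast
  moreover have "card (bridges E) = card E - card S"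
    unfolding bridges_def S_def[symmetric] K_def[symmetric] using SE fE by (simp add: card_Diff_subset finite_subset)
  moreover have "card S \<le> card E" using SE fE card_mono by blast
  ultimately show ?thesis using cF S4 by linarith
qed

lemma vertex_in_cycle: "is_cycle E C \<Longrightarrow> e \<in> cycle_edges C \<Longrightarrow> v \<in> e \<Longrightarrow> v \<in> set C"
  using cycle_edge_sub_set unfolding is_cycle_def by fastforce

lemma cycle_vertex_deg:
  assumes sg: "simple_graph V E" and C: "is_cycle E C" and e: "e \<in> cycle_edges C" and v: "v \<in> e"
  shows "2 \<le> degree E v"
proof -
  have "2 = card {e \<in> cycle_edges C. v \<in> e}" using cycle_vertex_card[OF C vertex_in_cycle[OF C e v]] by simp
  also have "\<dots> \<le> degree E v" unfolding degree_def
    using cycle_edges_sub[OF C] fin_E[OF sg] by (intro card_mono) auto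
  finally show ?thesis .
qed

lemma leaves_bound:
  assumes cac: "cactus V E" and n3: "3 \<le> card V"
  shows "mu1 V E \<le> card (bridges E)"
proof -
  have sg: "simple_graph V E" using cac by (simp add: cactus_def)
  have con: "connected_graph V E" using cac by (simp add: cactus_def)
  have fE: "finite E" using fin_E[OF sg] .
  have fV: "finite V" and eV: "\<forall>e\<in>E. e \<subseteq> V \<and> card e = 2" using sg by (auto simp: simple_graph_def)
  define L where "L = {v\<in>V. degree E v = 1}"
  define ed where "ed v = (THE e. e \<in> E \<and> v \<in> e)" for v
  have edL: "{e\<in>E. v \<in> e} = {ed v}" if "v \<in> L" for v
  proof -
    have "card {e\<in>E. v \<in> e} = 1" using that unfolding L_def degree_def by auto
    then have "\<exists>a. {e\<in>E. v \<in> e} = {a}" by (simp add: card_1_singleton_iff)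
    then obtain a where a: "{e\<in>E. v \<in> e} = {a}" by blast
    then have "ed v = a" unfolding ed_def by (intro the_equality) auto
    then show ?thesis using a by simp
  qed
  have edB: "ed v \<in> bridges E" if "v \<in> L" for v
  proof -
    have edE: "ed v \<in> E" "v \<in> ed v" using edL[OF that] by auto
    have "ed v \<notin> \<Union>(cyc_sets E)"
    proof
      assume "ed v \<in> \<Union>(cyc_sets E)"
      then obtain C where C: "is_cycle E C" "ed v \<in> cycle_edges C" unfolding cyc_sets_def by blast
      have "2 \<le> degree E v" using cycle_vertex_deg[OF sg C edE(2)] .
      then show False using that L_def by simp
    qed
    then show ?thesis using edE bridges_def by auto
  qed
  have inj: "inj_on ed L"
  proof (rule inj_onI)
    fix u v assume u: "u \<in> L" and v: "v \<in> L" and eq: "ed u = ed v"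
    show "u = v"
    proof (rule ccontr)
      assume uv: "u \<noteq> v"
      have e: "ed u \<in> E" "u \<in> ed u" "v \<in> ed u" using edL[OF u] edL[OF v] eq by auto
      have cd: "card (ed u) = 2" using e eV by auto
      have edu: "ed u = {u, v}"
      proof -
        have "{u, v} \<subseteq> ed u" using e by auto
        moreover have "card {u, v} = 2" using uv by simp
        ultimately show ?thesis using cd
          by (metis card.infinite card_subset_eq zero_neq_numeral)
      qed
      have only: "w \<in> {u, v}" if zw: "{z, w} \<in> E" "z \<in> {u, v}" for z w
      proof -
        have "{z, w} = ed u"
        proof (cases "z = u")
          case True
          then have "{z, w} \<in> {e\<in>E. u \<in> e}" using zw(1) by simp
          then show ?thesis using edL[OF u] by simp
        next
          case False then have "z = v" using zw(2) by simp
          then have "{z, w} \<in> {e\<in>E. v \<in> e}" using zw(1) by simp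
          then show ?thesis using edL[OF v] eq by simp
        qed
        then show ?thesis using edu by auto
      qed
      have "\<exists>w. w \<in> V - {u, v}"
      proof (rule ccontr)
        assume "\<nexists>w. w \<in> V - {u, v}"
        then have "V \<subseteq> {u, v}" by auto
        then have "card V \<le> 2" by (metis card_2_iff card_mono finite.emptyI finite.insertI uv)
        then show False using n3 by simp
      qed
      then obtain w where w: "w \<in> V" "w \<noteq> u" "w \<noteq> v" by auto
      have uV: "u \<in> V" using u L_def by auto
      obtain xs where xs: "is_walk E xs" "hd xs = u" "last xs = w" using con uV w unfolding connected_graph_def by blast
      have xne: "xs \<noteq> []" and xe: "\<And>i. Suc i < length xs \<Longrightarrow> {xs ! i, xs ! Suc i} \<in> E"
        using xs unfolding is_walk_def by auto
      have all: "i < length xs \<Longrightarrow> xs ! i \<in> {u, v}" for i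
      proof (induction i)
        case 0 then show ?case using xs xne by (simp add: hd_conv_nth[symmetric])
      next
        case (Suc i) then show ?case using only xe by auto
      qed
      have "last xs \<in> {u, v}" using all[of "length xs - 1"] xne by (simp add: last_conv_nth)
      then show False using xs w by auto
    qed
  qed
  have "card L \<le> card (bridges E)"
    using card_inj_on_le[OF inj] edB fE bridges_def by (metis finite_Diff image_subsetI)
  then show ?thesis unfolding mu1_def L_def .
qed

lemma odd_bound:
  assumes cac: "cactus V E"
  shows "mu1 V E + mu_odd V E \<le> 2 * card (bridges E)"
proof -
  have sg: "simple_graph V E" using cac by (simp add: cactus_def)
  have fE: "finite E" using fin_E[OF sg] .
  have fV: "finite V" and eV: "\<forall>e\<in>E. e \<subseteq> V \<and> card e = 2" using sg by (auto simp: simple_graph_def)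
  define K where "K = cyc_sets E"
  have KE: "k \<subseteq> E" if "k \<in> K" for k using that cycle_edges_sub unfolding K_def cyc_sets_def by blast
  have fK: "finite K" using KE fE by (meson finite_Pow_iff finite_subset PowI subsetI)
  have disj: "k1 \<inter> k2 = {}" if kk: "k1 \<in> K" "k2 \<in> K" "k1 \<noteq> k2" for k1 k2
  proof (rule ccontr)
    assume "k1 \<inter> k2 \<noteq> {}"
    then obtain e where e: "e \<in> k1" "e \<in> k2" by blast
    obtain C1 C2 where C: "is_cycle E C1" "k1 = cycle_edges C1" "is_cycle E C2" "k2 = cycle_edges C2"
      using kk unfolding K_def cyc_sets_def by blast
    have "e \<in> E" using e C cycle_edges_sub by blast
    then have "k1 = k2" using cac e C unfolding cactus_def by blast
    then show False using kk by simp
  qed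
  define Od where "Od = {v\<in>V. odd (degree E v)}"
  have even: "even (degree E v)" if "\<forall>e\<in>bridges E. v \<notin> e" for v
  proof -
    define Kv where "Kv = {k\<in>K. \<exists>e\<in>k. v \<in> e}"
    define A where "A k = {e\<in>k. v \<in> e}" for k
    have eq: "{e\<in>E. v \<in> e} = (\<Union>k\<in>Kv. A k)"
    proof
      show "{e\<in>E. v \<in> e} \<subseteq> (\<Union>k\<in>Kv. A k)"
      proof
        fix e assume e: "e \<in> {e\<in>E. v \<in> e}"
        then have "e \<notin> bridges E" using that by auto
        then have "e \<in> \<Union>K" using e K_def bridges_def by auto
        then obtain k where "k \<in> K" "e \<in> k" by blast
        then show "e \<in> (\<Union>k\<in>Kv. A k)" using e Kv_def A_def by auto
      qed
      show "(\<Union>k\<in>Kv. A k) \<subseteq> {e\<in>E. v \<in> e}" using KE Kv_def A_def by auto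
    qed
    have A2: "card (A k) = 2" if kv: "k \<in> Kv" for k
    proof -
      obtain C where C: "is_cycle E C" "k = cycle_edges C" using kv unfolding Kv_def K_def cyc_sets_def by blast
      obtain e where ee: "e \<in> k" "v \<in> e" using kv unfolding Kv_def by blast
      have "e \<in> cycle_edges C" using ee(1) C(2) by simp
      then have "v \<in> set C" using vertex_in_cycle[OF C(1)] ee(2) by blast
      then show ?thesis using cycle_vertex_card[OF C(1)] C A_def by simp
    qed
    have fKv: "finite Kv" using fK Kv_def by auto
    have "card {e\<in>E. v \<in> e} = (\<Sum>k\<in>Kv. card (A k))"
      unfolding eq
    proof (rule card_UN_disjoint[OF fKv])
      show "\<forall>i\<in>Kv. finite (A i)" using KE fE A_def Kv_def finite_subset by fastforce
      show "\<forall>i\<in>Kv. \<forall>j\<in>Kv. i \<noteq> j \<longrightarrow> A i \<inter> A j = {}" using disj A_def Kv_def by blast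
    qed
    also have "\<dots> = 2 * card Kv" using A2 by simp
    finally show ?thesis unfolding degree_def by simp
  qed
  have OB: "Od \<subseteq> \<Union>(bridges E)" using even Od_def by blast
  have fB: "finite (bridges E)" using fE unfolding bridges_def by simp
  have "card Od \<le> card (\<Union>(bridges E))"
  proof -
    have "\<Union>(bridges E) \<subseteq> V" using eV unfolding bridges_def by blast
    then have "finite (\<Union>(bridges E))" using fV finite_subset by blast
    then show ?thesis using OB by (rule card_mono)
  qed
  also have "\<dots> \<le> (\<Sum>e\<in>bridges E. card e)" using card_Union_le_sum_card by blast
  also have "\<dots> = (\<Sum>e\<in>bridges E. 2)" using eV bridges_def by (intro sum.cong) auto
  also have "\<dots> = 2 * card (bridges E)" by simp
  finally have cO: "card Od \<le> 2 * card (bridges E)" .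
  have un: "{v\<in>V. degree E v = 1} \<union> {v\<in>V. odd (degree E v) \<and> degree E v > 1} \<subseteq> Od"
    using Od_def by auto
  have "mu1 V E + mu_odd V E = card ({v\<in>V. degree E v = 1} \<union> {v\<in>V. odd (degree E v) \<and> degree E v > 1})"
    unfolding mu1_def mu_odd_def using fV by (subst card_Un_disjoint) auto
  also have "\<dots> \<le> card Od" using un fV Od_def by (intro card_mono) auto
  finally show ?thesis using cO by linarith
qed

theorem theorem4p13:
  fixes V :: "'a set" and E :: "'a set set"
  assumes "bi_cactus V E"
    and "card V \<ge> 4"
    and "beta V E \<ge> 1"
  shows "int (card E) \<le> \<lfloor>(4 * (real (card V) - 1) - beta V E) / 3\<rfloor>"
proof -
  have cac: "cactus V E" and bip: "bipartite V E" using assms(1) bi_cactus_def by auto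
  have ne: "V \<noteq> {}" using assms(2) by auto
  have m: "3 * card E + card (bridges E) \<le> 4 * (card V - 1)" using main_count[OF cac bip ne] .
  have l: "mu1 V E \<le> card (bridges E)" using leaves_bound[OF cac] assms(2) by simp
  have o: "mu1 V E + mu_odd V E \<le> 2 * card (bridges E)" using odd_bound[OF cac] .
  have b: "beta V E \<le> real (card (bridges E))" unfolding beta_def using l o by simp
  have m': "3 * real (card E) + real (card (bridges E)) \<le> 4 * (real (card V) - 1)"
    using m assms(2) by (simp add: of_nat_diff)
  have "real_of_int (int (card E)) \<le> (4 * (real (card V) - 1) - beta V E) / 3"
    using m' b by simp
  then show ?thesis by (simp add: le_floor_iff)
qed


end
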